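(* Let $U=(E,\mathcal{D},\rho)$ and $U'=(E,\mathcal{D}',\rho')$ be U-matroids, with base polyhedra $\mathfrak p=\mathcal{B}(U)$ and $\mathfrak p'=\mathcal{B}(U')$. Then $U'$ is a lattice extension of $U$ (i.e. $\mathcal{D}\subseteq\mathcal{D}'$ and $\rho'|_{\mathcal{D}}=\rho$) if and only if $\mathfrak p'$ is a sheared polyhedron of $\mathfrak p$, i.e. $\mathfrak p'\subseteq\mathfrak p$ and the vertex set of $\mathfrak p'$ contains the vertex set of $\mathfrak p$.
   Context: A U-matroid is a triple $(E,\mathcal{D},\rho)$ with $E$ finite, $\mathcal{D}\subseteq2^E$ an accessible distributive lattice of sets, and $\rho:\mathcal{D}\to\mathbb{N}$ with $\rho(\emptyset)=0$, monotone, submodular, with unit increase. Its base polyhedron is $\mathcal{B}(U)=\{\mathbf{x}\in\mathbb{R}^E:\mathbf{x}(A)\le\rho(A)\ \forall A\in\mathcal{D},\ \mathbf{x}(E)=\rho(E)\}$. *)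

theory Defs
  imports Complex_Main
begin

definition accessible_distributive_lattice :: "'a set \<Rightarrow> 'a set set \<Rightarrow> bool" where
  "accessible_distributive_lattice E D \<longleftrightarrow>
     D \<subseteq> Pow E \<and> {} \<in> D \<and> E \<in> D \<and>
     (\<forall>A\<in>D. \<forall>B\<in>D. A \<union> B \<in> D \<and> A \<inter> B \<in> D) \<and>
     (\<forall>A\<in>D. A \<noteq> {} \<longrightarrow> (\<exists>a\<in>A. A - {a} \<in> D))"

text \<open>U-matroid (E, D, rho); rho is only meaningful on D.\<close>
definition U_matroid :: "'a set \<Rightarrow> 'a set set \<Rightarrow> ('a set \<Rightarrow> nat) \<Rightarrow> bool" where
  "U_matroid E D \<rho> \<longleftrightarrow>
     finite E \<and> accessible_distributive_lattice E D \<and>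
     \<rho> {} = 0 \<and>
     (\<forall>A\<in>D. \<forall>B\<in>D. A \<subseteq> B \<longrightarrow> \<rho> A \<le> \<rho> B) \<and>
     (\<forall>A\<in>D. \<forall>B\<in>D. \<rho> (A \<union> B) + \<rho> (A \<inter> B) \<le> \<rho> A + \<rho> B) \<and>
     (\<forall>A\<in>D. \<forall>a. A \<union> {a} \<in> D \<longrightarrow> \<rho> (A \<union> {a}) \<le> \<rho> A + 1)"

text \<open>Vectors in R^E are functions 'a => real vanishing outside E.\<close>
definition base_polyhedron :: "'a set \<Rightarrow> 'a set set \<Rightarrow> ('a set \<Rightarrow> nat) \<Rightarrow> ('a \<Rightarrow> real) set" where
  "base_polyhedron E D \<rho> =
     {x. (\<forall>e. e \<notin> E \<longrightarrow> x e = 0) \<and>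
         (\<forall>A\<in>D. (\<Sum>e\<in>A. x e) \<le> real (\<rho> A)) \<and>
         (\<Sum>e\<in>E. x e) = real (\<rho> E)}"

definition vertices :: "('a \<Rightarrow> real) set \<Rightarrow> ('a \<Rightarrow> real) set" where
  "vertices P = {x \<in> P. \<forall>a\<in>P. \<forall>b\<in>P. a \<noteq> b \<longrightarrow>
       \<not> (\<exists>u::real. 0 < u \<and> u < 1 \<and> x = (\<lambda>e. (1 - u) * a e + u * b e))}"

definition lattice_extension ::
  "'a set set \<Rightarrow> ('a set \<Rightarrow> nat) \<Rightarrow> 'a set set \<Rightarrow> ('a set \<Rightarrow> nat) \<Rightarrow> bool" where
  "lattice_extension D \<rho> D' \<rho>' \<longleftrightarrow> D \<subseteq> D' \<and> (\<forall>A\<in>D. \<rho>' A = \<rho> A)"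

definition sheared_polyhedron :: "('a \<Rightarrow> real) set \<Rightarrow> ('a \<Rightarrow> real) set \<Rightarrow> bool" where
  "sheared_polyhedron P' P \<longleftrightarrow> P' \<subseteq> P \<and> vertices P \<subseteq> vertices P'"

end

theory Submission
  imports Defs
begin

locale um = fixes E :: "'a set" and D :: "'a set set" and \<rho> :: "'a set \<Rightarrow> nat"
  assumes U: "U_matroid E D \<rho>"
begin

lemma fin: "finite E" using U by (simp add: U_matroid_def)
lemma DE: "A \<in> D \<Longrightarrow> A \<subseteq> E" using U by (auto simp: U_matroid_def accessible_distributive_lattice_def)
lemma finD: "A \<in> D \<Longrightarrow> finite A" using DE fin finite_subset by blast
lemma empty_in: "{} \<in> D" using U by (auto simp: U_matroid_def accessible_distributive_lattice_def)
lemma E_in: "E \<in> D" using U by (auto simp: U_matroid_def accessible_distributive_lattice_def)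
lemma Un_in: "A \<in> D \<Longrightarrow> B \<in> D \<Longrightarrow> A \<union> B \<in> D" using U by (auto simp: U_matroid_def accessible_distributive_lattice_def)
lemma Int_in: "A \<in> D \<Longrightarrow> B \<in> D \<Longrightarrow> A \<inter> B \<in> D" using U by (auto simp: U_matroid_def accessible_distributive_lattice_def)
lemma acc: "A \<in> D \<Longrightarrow> A \<noteq> {} \<Longrightarrow> \<exists>a\<in>A. A - {a} \<in> D" using U by (auto simp: U_matroid_def accessible_distributive_lattice_def)
lemma rho0: "\<rho> {} = 0" using U by (simp add: U_matroid_def)
lemma submod: "A \<in> D \<Longrightarrow> B \<in> D \<Longrightarrow> real (\<rho> (A \<union> B)) + real (\<rho> (A \<inter> B)) \<le> real (\<rho> A) + real (\<rho> B)"
proof -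
  assume "A \<in> D" "B \<in> D"
  then have "\<rho> (A \<union> B) + \<rho> (A \<inter> B) \<le> \<rho> A + \<rho> B" using U by (simp add: U_matroid_def)
  then show ?thesis by (metis of_nat_add of_nat_le_iff)
qed
lemma finiteD: "finite D"
proof -
  have "D \<subseteq> Pow E" using DE by auto
  then show ?thesis using fin by (meson finite_Pow_iff finite_subset)
qed

definition tight :: "('a \<Rightarrow> real) \<Rightarrow> 'a set \<Rightarrow> bool" where
  "tight x A \<longleftrightarrow> (\<Sum>e\<in>A. x e) = real (\<rho> A)"

definition gprops where "gprops S x \<longleftrightarrow> (\<forall>e. e \<notin> S \<longrightarrow> x e = 0) \<and> tight x S \<and>
   (\<forall>B\<in>D. (\<Sum>e\<in>B \<inter> S. x e) \<le> real (\<rho> (B \<inter> S))) \<and>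
   (\<forall>T\<in>D. T \<subseteq> S \<longrightarrow> T \<noteq> {} \<longrightarrow> tight x T \<longrightarrow> (\<exists>c\<in>T. T - {c} \<in> D \<and> tight x (T - {c})))"

lemma remove_c: assumes "A \<in> D" shows "S \<in> D \<Longrightarrow> \<not> S \<subseteq> A \<Longrightarrow> \<exists>c\<in>S - A. (S \<union> A) - {c} \<in> D"
proof (induction "card S" arbitrary: S rule: less_induct)
  case less
  then have "S \<noteq> {}" by auto
  then obtain b where b: "b \<in> S" "S - {b} \<in> D" using acc less.prems by blast
  show ?case
  proof (cases "b \<in> A")
    case False
    have "(S - {b}) \<union> A \<in> D" using Un_in b assms by auto
    moreover have "(S - {b}) \<union> A = (S \<union> A) - {b}" using False by auto
    ultimately show ?thesis using b False by auto
  next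
    case True
    have "\<not> S - {b} \<subseteq> A" using less.prems True by auto
    moreover have "card (S - {b}) < card S" using b finD less.prems by (meson card_Diff1_less)
    ultimately obtain c where "c \<in> (S - {b}) - A" "((S - {b}) \<union> A) - {c} \<in> D" using less.hyps b by blast
    moreover have "(S - {b}) \<union> A = S \<union> A" using True b by auto
    ultimately show ?thesis by auto
  qed
qed

lemma construct: assumes "A \<in> D" shows "S \<in> D \<Longrightarrow> \<exists>x. gprops S x \<and> (A \<subseteq> S \<longrightarrow> tight x A)"
proof (induction "card S" arbitrary: S rule: less_induct)
  case less
  show ?case
  proof (cases "S = {}")
    case True
    have "gprops S (\<lambda>_. 0)" using True rho0 by (auto simp: gprops_def tight_def)
    moreover have "A \<subseteq> S \<longrightarrow> tight (\<lambda>_. 0) A" using True rho0 by (auto simp: tight_def)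
    ultimately show ?thesis by blast
  next
    case False
    have "\<exists>c\<in>S. S - {c} \<in> D \<and> (A \<subset> S \<longrightarrow> c \<notin> A)"
    proof (cases "A \<subset> S")
      case True
      then obtain c where "c \<in> S - A" "(S \<union> A) - {c} \<in> D" using remove_c[OF assms less.prems] by blast
      moreover have "S \<union> A = S" using True by auto
      ultimately show ?thesis by auto
    next
      case False
      then show ?thesis using acc less.prems \<open>S \<noteq> {}\<close> by blast
    qed
    then obtain c where c: "c \<in> S" "S - {c} \<in> D" "A \<subset> S \<longrightarrow> c \<notin> A" by blast
    define S0 where "S0 = S - {c}"
    have S0: "S0 \<in> D" "card S0 < card S" "c \<notin> S0" "S = insert c S0" "finite S0"
    proof -
      show "S0 \<in> D" "c \<notin> S0" "S = insert c S0" using c by (auto simp: S0_def)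
      show "finite S0" using finD less.prems by (simp add: S0_def)
      show "card S0 < card S" using c finD[OF less.prems] by (metis S0_def card_Diff1_less)
    qed
    obtain x0 where x0: "gprops S0 x0" "A \<subseteq> S0 \<longrightarrow> tight x0 A"
      using less.hyps S0 by blast
    define x where "x = x0(c := real (\<rho> S) - real (\<rho> S0))"
    have sx0: "(\<Sum>e\<in>X. x e) = (\<Sum>e\<in>X. x0 e)" if "c \<notin> X" for X
      using that by (intro sum.cong) (auto simp: x_def)
    have sx1: "(\<Sum>e\<in>insert c X. x e) = real (\<rho> S) - real (\<rho> S0) + (\<Sum>e\<in>X. x0 e)"
      if "c \<notin> X" "finite X" for X
      using that sx0[of X] by (simp add: x_def)
    have x0S0: "(\<Sum>e\<in>S0. x0 e) = real (\<rho> S0)" using x0(1) by (simp add: gprops_def tight_def)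
    have x0B: "(\<Sum>e\<in>B \<inter> S0. x0 e) \<le> real (\<rho> (B \<inter> S0))" if "B \<in> D" for B
      using x0(1) that by (simp add: gprops_def)
    have key: "real (\<rho> S) - real (\<rho> S0) \<le> real (\<rho> (B \<inter> S)) - real (\<rho> (B \<inter> S0))"
      if "B \<in> D" "c \<in> B" for B
    proof -
      have "B \<inter> S \<in> D" using Int_in that less.prems by auto
      from submod[OF this S0(1)]
      have "real (\<rho> (B \<inter> S \<union> S0)) + real (\<rho> (B \<inter> S \<inter> S0)) \<le> real (\<rho> (B \<inter> S)) + real (\<rho> S0)" .
      moreover have "B \<inter> S \<union> S0 = S" using S0 that by auto
      moreover have "B \<inter> S \<inter> S0 = B \<inter> S0" using S0 by auto
      ultimately show ?thesis by simp
    qed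
    have g1: "\<forall>e. e \<notin> S \<longrightarrow> x e = 0" using x0(1) S0 by (auto simp: gprops_def x_def)
    have g2: "tight x S" using sx1[of S0] S0 x0S0 by (simp add: tight_def)
    have g3: "(\<Sum>e\<in>B \<inter> S. x e) \<le> real (\<rho> (B \<inter> S))" if "B \<in> D" for B
    proof (cases "c \<in> B")
      case True
      have "B \<inter> S = insert c (B \<inter> S0)" using True S0 by auto
      then have "(\<Sum>e\<in>B \<inter> S. x e) = real (\<rho> S) - real (\<rho> S0) + (\<Sum>e\<in>B \<inter> S0. x0 e)"
        using sx1[of "B \<inter> S0"] S0 by simp
      then show ?thesis using key[OF that True] x0B[OF that] by linarith
    next
      case False
      have "B \<inter> S = B \<inter> S0" using False S0 by auto
      then show ?thesis using sx0[of "B \<inter> S0"] False x0B[OF that] by simp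
    qed
    have g4: "\<exists>c'\<in>T. T - {c'} \<in> D \<and> tight x (T - {c'})"
      if T: "T \<in> D" "T \<subseteq> S" "T \<noteq> {}" "tight x T" for T
    proof (cases "c \<in> T")
      case False
      then have "T \<subseteq> S0" using T S0 by auto
      moreover have "tight x0 T" using T(4) sx0[of T] False by (simp add: tight_def)
      ultimately obtain c' where "c' \<in> T" "T - {c'} \<in> D" "tight x0 (T - {c'})"
        using x0(1) T unfolding gprops_def by blast
      then show ?thesis using sx0[of "T - {c'}"] False by (auto simp: tight_def)
    next
      case True
      have TS0: "T \<inter> S0 = T - {c}" using T S0 by auto
      have "T = insert c (T \<inter> S0)" using True TS0 by auto
      then have "(\<Sum>e\<in>T. x e) = real (\<rho> S) - real (\<rho> S0) + (\<Sum>e\<in>T \<inter> S0. x0 e)"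
        using sx1[of "T \<inter> S0"] S0 by (metis Int_iff finite_Int)
      moreover have "T \<inter> S = T" using T by auto
      ultimately have "tight x0 (T \<inter> S0)" using key[OF T(1) True] x0B[OF T(1)] T(4)
        by (simp add: tight_def)
      moreover have "T - {c} \<in> D" using TS0 Int_in T(1) S0(1) by metis
      ultimately show ?thesis using True TS0 sx0[of "T - {c}"] by (auto simp: tight_def)
    qed
    have "gprops S x" using g1 g2 g3 g4 by (simp add: gprops_def)
    moreover have "tight x A" if "A \<subseteq> S"
    proof (cases "A = S")
      case True then show ?thesis using g2 by simp
    next
      case False
      then have "c \<notin> A" "A \<subseteq> S0" using that c S0 by auto
      then show ?thesis using x0(2) sx0[of A] by (simp add: tight_def)
    qed
    ultimately show ?thesis by blast
  qed
qed


abbreviation P where "P \<equiv> base_polyhedron E D \<rho>"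

lemma inP: "x \<in> P \<Longrightarrow> A \<in> D \<Longrightarrow> (\<Sum>e\<in>A. x e) \<le> real (\<rho> A)"
  by (simp add: base_polyhedron_def)

lemma tight_closed: assumes "x \<in> P" "A \<in> D" "B \<in> D" "tight x A" "tight x B"
  shows "tight x (A \<union> B)" "tight x (A \<inter> B)"
proof -
  have "(\<Sum>e\<in>A \<union> B. x e) + (\<Sum>e\<in>A \<inter> B. x e) = (\<Sum>e\<in>A. x e) + (\<Sum>e\<in>B. x e)"
    using finD assms by (simp add: sum.union_inter)
  moreover have "(\<Sum>e\<in>A \<union> B. x e) \<le> real (\<rho> (A \<union> B))" using inP assms Un_in by blast
  moreover have "(\<Sum>e\<in>A \<inter> B. x e) \<le> real (\<rho> (A \<inter> B))" using inP assms Int_in by blast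
  moreover note submod[OF assms(2,3)]
  ultimately show "tight x (A \<union> B)" "tight x (A \<inter> B)" using assms(4,5) unfolding tight_def by linarith+
qed

lemma lin_eq: fixes u p q r :: real assumes "0 < u" "u < 1" "p \<le> r" "q \<le> r" "(1 - u) * p + u * q = r"
  shows "p = r \<and> q = r"
proof -
  have "(1 - u) * p \<le> (1 - u) * r" "u * q \<le> u * r" using assms by (auto intro: mult_left_mono)
  moreover have "p < r \<Longrightarrow> (1 - u) * p < (1 - u) * r" using assms by simp
  moreover have "q < r \<Longrightarrow> u * q < u * r" using assms by simp
  moreover have "(1 - u) * r + u * r = r" by (simp add: algebra_simps)
  ultimately show ?thesis using assms(3,4,5) by linarith
qed

lemma gprops_vertex: assumes g: "gprops E x" shows "x \<in> vertices P"
proof -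
  have xP: "x \<in> P" using g DE by (auto simp: gprops_def base_polyhedron_def tight_def Int_absorb2)
  have "a = b" if ab: "a \<in> P" "b \<in> P" "0 < u" "u < 1" "x = (\<lambda>e. (1 - u) * a e + u * b e)" for a b u
  proof -
    have tt: "tight a T \<and> tight b T" if "T \<in> D" "tight x T" for T
    proof -
      have e1: "(\<Sum>e\<in>T. x e) = (1 - u) * (\<Sum>e\<in>T. a e) + u * (\<Sum>e\<in>T. b e)"
        using ab(5) by (simp add: sum.distrib sum_distrib_left)
      have e2: "(\<Sum>e\<in>T. a e) \<le> real (\<rho> T)" "(\<Sum>e\<in>T. b e) \<le> real (\<rho> T)" using inP ab that by auto
      have e3: "(1 - u) * (\<Sum>e\<in>T. a e) + u * (\<Sum>e\<in>T. b e) = real (\<rho> T)"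
        using that e1 by (simp add: tight_def)
      show ?thesis using lin_eq[OF ab(3,4) e2 e3] by (simp add: tight_def)
    qed
    have ind: "T \<in> D \<Longrightarrow> tight x T \<Longrightarrow> \<forall>e\<in>T. a e = x e \<and> b e = x e" for T
    proof (induction "card T" arbitrary: T rule: less_induct)
      case less
      show ?case
      proof (cases "T = {}")
        case True then show ?thesis by simp
      next
        case False
        have "T \<subseteq> E" using DE less.prems by auto
        then obtain c where c: "c \<in> T" "T - {c} \<in> D" "tight x (T - {c})"
          using g less.prems False unfolding gprops_def by blast
        have fT: "finite T" using finD less.prems by auto
        have IH: "\<forall>e\<in>T - {c}. a e = x e \<and> b e = x e"
          using less.hyps[OF _ c(2,3)] card_Diff1_less[OF fT c(1)] by blast
        have t1: "tight a T" "tight b T" "tight a (T - {c})" "tight b (T - {c})"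
          using tt less.prems c by auto
        have sp: "(\<Sum>e\<in>T. f e) = f c + (\<Sum>e\<in>T - {c}. f e)" for f :: "'a \<Rightarrow> real"
          using fT c(1) by (simp add: sum.remove)
        have "(\<Sum>e\<in>T - {c}. a e) = (\<Sum>e\<in>T - {c}. x e)" "(\<Sum>e\<in>T - {c}. b e) = (\<Sum>e\<in>T - {c}. x e)"
          using IH by (auto intro: sum.cong)
        then have "a c = x c" "b c = x c" using t1 less.prems(2) sp[of a] sp[of b] sp[of x]
          unfolding tight_def by linarith+
        then show ?thesis using IH by auto
      qed
    qed
    have "tight x E" using g by (simp add: gprops_def)
    then have "\<forall>e\<in>E. a e = x e \<and> b e = x e" using ind E_in by blast
    moreover have "\<forall>e. e \<notin> E \<longrightarrow> a e = 0 \<and> b e = 0" using ab by (simp add: base_polyhedron_def)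
    ultimately show "a = b" by (metis ext)
  qed
  then show ?thesis using xP unfolding vertices_def by blast
qed

definition pert :: "('a \<Rightarrow> real) \<Rightarrow> 'a \<Rightarrow> 'a \<Rightarrow> real \<Rightarrow> 'a \<Rightarrow> real" where
  "pert x u v t = (\<lambda>e. x e + (if e = u then t else 0) - (if e = v then t else 0))"

lemma pert_sum: "finite A \<Longrightarrow> (\<Sum>e\<in>A. pert x u v t e) =
   (\<Sum>e\<in>A. x e) + (if u \<in> A then t else 0) - (if v \<in> A then t else 0)"
  by (simp add: pert_def sum.distrib sum_subtractf)


lemma vertex_sep: assumes xv: "x \<in> vertices P" and uv: "u \<in> E" "v \<in> E" "u \<noteq> v"
  shows "\<exists>C\<in>D. tight x C \<and> (u \<in> C) \<noteq> (v \<in> C)"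
proof (rule ccontr)
  assume "\<not> ?thesis"
  then have H: "\<And>C. C \<in> D \<Longrightarrow> tight x C \<Longrightarrow> (u \<in> C \<longleftrightarrow> v \<in> C)" by blast
  have xP: "x \<in> P" using xv by (simp add: vertices_def)
  define N where "N = {A \<in> D. \<not> tight x A}"
  have fN: "finite N" using finiteD by (simp add: N_def)
  define \<epsilon> where "\<epsilon> = (if N = {} then 1 else Min ((\<lambda>A. real (\<rho> A) - (\<Sum>e\<in>A. x e)) ` N))"
  have slack: "(\<Sum>e\<in>A. x e) < real (\<rho> A)" if "A \<in> N" for A
    using that inP[OF xP] by (force simp: N_def tight_def)
  have epos: "\<epsilon> > 0"
  proof (cases "N = {}")
    case False
    then have "\<epsilon> \<in> (\<lambda>A. real (\<rho> A) - (\<Sum>e\<in>A. x e)) ` N" using fN by (simp add: \<epsilon>_def)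
    then show ?thesis using slack by auto
  qed (simp add: \<epsilon>_def)
  have ele: "\<epsilon> \<le> real (\<rho> A) - (\<Sum>e\<in>A. x e)" if "A \<in> N" for A
  proof -
    have "N \<noteq> {}" using that by auto
    then show ?thesis using fN that by (simp add: \<epsilon>_def)
  qed
  have pP: "pert x u v t \<in> P" if "\<bar>t\<bar> \<le> \<epsilon>" for t
  proof -
    have "pert x u v t e = 0" if "e \<notin> E" for e
      using that uv xP by (auto simp: pert_def base_polyhedron_def)
    moreover have "(\<Sum>e\<in>A. pert x u v t e) \<le> real (\<rho> A)" if A: "A \<in> D" for A
    proof (cases "tight x A")
      case True
      then show ?thesis using H[OF A True] pert_sum[OF finD[OF A], of x u v t] inP[OF xP A] by auto
    next
      case False
      then have "A \<in> N" using A by (simp add: N_def)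
      then have "\<epsilon> \<le> real (\<rho> A) - (\<Sum>e\<in>A. x e)" by (rule ele)
      moreover have "t \<le> \<epsilon>" "- \<epsilon> \<le> t" using \<open>\<bar>t\<bar> \<le> \<epsilon>\<close> by linarith+
      ultimately show ?thesis using pert_sum[OF finD[OF A], of x u v t] epos
        by (simp split: if_splits)
    qed
    moreover have "(\<Sum>e\<in>E. pert x u v t e) = real (\<rho> E)"
      using pert_sum[OF fin, of x u v t] uv xP by (simp add: base_polyhedron_def)
    ultimately show ?thesis by (simp add: base_polyhedron_def)
  qed
  have "pert x u v \<epsilon> \<in> P" "pert x u v (-\<epsilon>) \<in> P" using pP epos by auto
  moreover have "pert x u v \<epsilon> \<noteq> pert x u v (-\<epsilon>)"
  proof
    assume "pert x u v \<epsilon> = pert x u v (-\<epsilon>)"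
    then have "pert x u v \<epsilon> u = pert x u v (-\<epsilon>) u" by simp
    then show False using uv epos by (simp add: pert_def)
  qed
  moreover have "x = (\<lambda>e. (1 - 1/2) * pert x u v \<epsilon> e + 1/2 * pert x u v (-\<epsilon>) e)"
    by (rule ext) (simp add: pert_def algebra_simps)
  moreover have "\<forall>a\<in>P. \<forall>b\<in>P. a \<noteq> b \<longrightarrow>
       \<not> (\<exists>w::real. 0 < w \<and> w < 1 \<and> x = (\<lambda>e. (1 - w) * a e + w * b e))"
    using xv unfolding vertices_def by blast
  ultimately have "\<not> (\<exists>w::real. 0 < w \<and> w < 1 \<and> x = (\<lambda>e. (1 - w) * pert x u v \<epsilon> e + w * pert x u v (-\<epsilon>) e))"
    by blast
  moreover have "(0::real) < 1/2" "(1/2::real) < 1" by auto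
  ultimately show False using \<open>x = _\<close> by blast
qed

lemma vertex_chain: assumes xv: "x \<in> vertices P" and T: "T \<in> D" "T \<noteq> {}" "tight x T"
  shows "\<exists>c\<in>T. T - {c} \<in> D \<and> tight x (T - {c})"
proof -
  have xP: "x \<in> P" using xv by (simp add: vertices_def)
  define F where "F = {S \<in> D. S \<subset> T \<and> tight x S}"
  have fF: "finite F" using finiteD by (simp add: F_def)
  have "{} \<in> F" using T empty_in rho0 by (auto simp: F_def tight_def)
  then have "card ` F \<noteq> {}" by auto
  then have "Max (card ` F) \<in> card ` F" using fF by simp
  then obtain S0 where S0: "S0 \<in> F" "card S0 = Max (card ` F)" by auto
  have S0max: "card S \<le> card S0" if "S \<in> F" for S using that fF S0(2) by simp
  have S0p: "S0 \<in> D" "S0 \<subset> T" "tight x S0" using S0 by (auto simp: F_def)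
  have fT: "finite T" using finD T by simp
  have "\<exists>c. T - S0 = {c}"
  proof (rule ccontr)
    assume ns: "\<nexists>c. T - S0 = {c}"
    obtain u where u: "u \<in> T - S0" using S0p by auto
    then obtain v where v: "v \<in> T - S0" "v \<noteq> u" using ns by blast
    have uvE: "u \<in> E" "v \<in> E" using u v DE T by auto
    obtain C where C: "C \<in> D" "tight x C" "(u \<in> C) \<noteq> (v \<in> C)" using vertex_sep[OF xv uvE v(2)[symmetric]] by blast
    define C' where "C' = (C \<inter> T) \<union> S0"
    have C'D: "C' \<in> D" using C T S0p Int_in Un_in by (simp add: C'_def)
    have C't: "tight x C'" using tight_closed[OF xP] C T S0p Int_in by (simp add: C'_def)
    have "S0 \<subset> C' \<and> C' \<subset> T"
      using C(3) u v S0p unfolding C'_def by auto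
    then have "C' \<in> F" "card S0 < card C'" using C'D C't fT
      by (auto simp: F_def intro: psubset_card_mono finite_subset)
    then show False using S0max by fastforce
  qed
  then obtain c where c: "T - S0 = {c}" by blast
  then have "S0 = T - {c}" "c \<in> T" using S0p by auto
  then show ?thesis using S0p by auto
qed

end

lemma fwd: assumes U: "U_matroid E D \<rho>" and U': "U_matroid E D' \<rho>'"
  and ext: "D \<subseteq> D'" "\<forall>A\<in>D. \<rho>' A = \<rho> A"
  and xv: "x \<in> vertices (base_polyhedron E D \<rho>)" and B: "B \<in> D'"
  shows "(\<Sum>e\<in>B. x e) \<le> real (\<rho>' B)"
proof -
  interpret u: um E D \<rho> using U by (simp add: um_def)
  interpret u': um E D' \<rho>' using U' by (simp add: um_def)
  have "S \<in> D \<Longrightarrow> u.tight x S \<Longrightarrow> (\<Sum>e\<in>B \<inter> S. x e) \<le> real (\<rho>' (B \<inter> S))" for S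
  proof (induction "card S" arbitrary: S rule: less_induct)
    case less
    show ?case
    proof (cases "S = {}")
      case True then show ?thesis by simp
    next
      case False
      obtain c where c: "c \<in> S" "S - {c} \<in> D" "u.tight x (S - {c})"
        using u.vertex_chain[OF xv less.prems(1) False less.prems(2)] by blast
      define S0 where "S0 = S - {c}"
      have fS: "finite S" using u.finD less.prems by simp
      have IH: "(\<Sum>e\<in>B \<inter> S0. x e) \<le> real (\<rho>' (B \<inter> S0))"
        using less.hyps[OF _ c(2,3)] card_Diff1_less[OF fS c(1)] by (simp add: S0_def)
      show ?thesis
      proof (cases "c \<in> B")
        case False
        then have "B \<inter> S = B \<inter> S0" by (auto simp: S0_def)
        then show ?thesis using IH by simp
      next
        case True
        have BS: "B \<inter> S = insert c (B \<inter> S0)" "c \<notin> B \<inter> S0" using True c by (auto simp: S0_def)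
        have s1: "(\<Sum>e\<in>B \<inter> S. x e) = x c + (\<Sum>e\<in>B \<inter> S0. x e)" using BS fS by (simp add: S0_def)
        have s2: "(\<Sum>e\<in>S. x e) = x c + (\<Sum>e\<in>S0. x e)" using fS c(1) by (simp add: S0_def sum.remove)
        have xc: "x c = real (\<rho>' S) - real (\<rho>' S0)"
          using s2 less.prems(2) c(3) ext less.prems(1) c(2) by (simp add: u.tight_def S0_def)
        have "B \<inter> S \<in> D'" using B less.prems(1) ext u'.Int_in by auto
        from u'.submod[OF this, of S0]
        have "real (\<rho>' (B \<inter> S \<union> S0)) + real (\<rho>' (B \<inter> S \<inter> S0)) \<le> real (\<rho>' (B \<inter> S)) + real (\<rho>' S0)"
          using c(2) ext by (auto simp: S0_def)
        moreover have "B \<inter> S \<union> S0 = S" "B \<inter> S \<inter> S0 = B \<inter> S0" using True c by (auto simp: S0_def)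
        ultimately show ?thesis using s1 xc IH by simp
      qed
    qed
  qed
  moreover have "u.tight x E" using xv u.E_in by (simp add: vertices_def base_polyhedron_def u.tight_def)
  moreover have "B \<inter> E = B" using u'.DE B by auto
  ultimately show ?thesis using u.E_in by metis
qed


theorem theorem4p4:
  fixes E :: "'a set" and D D' :: "'a set set" and \<rho> \<rho>' :: "'a set \<Rightarrow> nat"
  assumes "U_matroid E D \<rho>" and "U_matroid E D' \<rho>'"
  shows "lattice_extension D \<rho> D' \<rho>' \<longleftrightarrow>
         sheared_polyhedron (base_polyhedron E D' \<rho>') (base_polyhedron E D \<rho>)"
proof -
  interpret u: um E D \<rho> using assms(1) by (simp add: um_def)
  interpret u': um E D' \<rho>' using assms(2) by (simp add: um_def)
  let ?P = "base_polyhedron E D \<rho>" and ?P' = "base_polyhedron E D' \<rho>'"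
  show ?thesis
  proof
    assume "lattice_extension D \<rho> D' \<rho>'"
    then have ext: "D \<subseteq> D'" "\<forall>A\<in>D. \<rho>' A = \<rho> A" by (auto simp: lattice_extension_def)
    have rE: "\<rho>' E = \<rho> E" using ext u.E_in by auto
    have sub: "?P' \<subseteq> ?P"
    proof
      fix x assume "x \<in> ?P'"
      then have h: "\<forall>e. e \<notin> E \<longrightarrow> x e = 0" "\<forall>A\<in>D'. (\<Sum>e\<in>A. x e) \<le> real (\<rho>' A)" "(\<Sum>e\<in>E. x e) = real (\<rho>' E)"
        by (auto simp: base_polyhedron_def)
      have "\<forall>A\<in>D. (\<Sum>e\<in>A. x e) \<le> real (\<rho> A)"
      proof
        fix A assume "A \<in> D" then show "(\<Sum>e\<in>A. x e) \<le> real (\<rho> A)" using h(2) ext by (metis subsetD)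
      qed
      then show "x \<in> ?P" using h(1,3) rE by (simp add: base_polyhedron_def)
    qed
    have "x \<in> vertices ?P'" if xv: "x \<in> vertices ?P" for x
    proof -
      have xP: "x \<in> ?P" using xv by (simp add: vertices_def)
      have "x \<in> ?P'" using xP fwd[OF assms ext xv] rE by (simp add: base_polyhedron_def)
      then show ?thesis using xv sub unfolding vertices_def by blast
    qed
    then show "sheared_polyhedron ?P' ?P" using sub by (auto simp: sheared_polyhedron_def)
  next
    assume "sheared_polyhedron ?P' ?P"
    then have sub: "?P' \<subseteq> ?P" and vv: "vertices ?P \<subseteq> vertices ?P'" by (auto simp: sheared_polyhedron_def)
    obtain y where "u'.gprops E y" using u'.construct[OF u'.E_in u'.E_in] by blast
    then have yP': "y \<in> ?P'" using u'.gprops_vertex by (simp add: vertices_def)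
    have DD: "A \<in> D'" if A: "A \<in> D" for A
    proof (rule ccontr)
      assume nA: "A \<notin> D'"
      have AE: "A \<subseteq> E" using u.DE A by simp
      define F where "F = {W \<in> D'. W \<subseteq> A}"
      have fF: "finite F" using u'.finiteD by (simp add: F_def)
      have "{} \<in> F" using u'.empty_in by (simp add: F_def)
      then have "Max (card ` F) \<in> card ` F" using fF by (intro Max_in) auto
      then obtain W where W: "W \<in> F" "card W = Max (card ` F)" by auto
      have Wmax: "card W' \<le> card W" if "W' \<in> F" for W' using that fF W(2) by simp
      have "W \<noteq> A" using W nA by (auto simp: F_def)
      then obtain u where u: "u \<in> A" "u \<notin> W" using W by (auto simp: F_def)
      define G where "G = {B \<in> D'. u \<in> B}"
      have fG: "finite G" using u'.finiteD by (simp add: G_def)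
      have "E \<in> G" using u'.E_in u AE by (auto simp: G_def)
      then have "Min (card ` G) \<in> card ` G" using fG by (intro Min_in) auto
      then obtain Bu where Bu: "Bu \<in> G" "card Bu = Min (card ` G)" by auto
      have Bumin: "card Bu \<le> card B" if "B \<in> G" for B using that fG Bu(2) by simp
      have Busub: "Bu \<subseteq> B" if "B \<in> G" for B
      proof (rule ccontr)
        assume "\<not> Bu \<subseteq> B"
        then have "Bu \<inter> B \<subset> Bu" by auto
        moreover have "finite Bu" using Bu u'.finD by (auto simp: G_def)
        ultimately have "card (Bu \<inter> B) < card Bu" by (simp add: psubset_card_mono)
        moreover have "Bu \<inter> B \<in> G" using Bu that u'.Int_in by (auto simp: G_def)
        ultimately show False using Bumin by fastforce
      qed
      have "\<not> Bu \<subseteq> A"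
      proof
        assume "Bu \<subseteq> A"
        then have "W \<union> Bu \<in> F" using W Bu u'.Un_in by (auto simp: F_def G_def)
        moreover have "W \<subset> W \<union> Bu" using Bu u by (auto simp: G_def)
        moreover have "finite (W \<union> Bu)" using W Bu u'.finD by (auto simp: F_def G_def)
        ultimately show False using Wmax by (meson leD psubset_card_mono)
      qed
      then obtain v where v: "v \<in> Bu" "v \<notin> A" by auto
      have uvE: "u \<in> E" "v \<in> E" using u AE v Bu u'.DE by (auto simp: G_def)
      have uv: "u \<noteq> v" using u v by auto
      define t where "t = \<bar>real (\<rho> A) - (\<Sum>e\<in>A. y e)\<bar> + 1"
      have t0: "t \<ge> 0" by (simp add: t_def)
      have "u'.pert y u v t \<in> ?P'"
      proof -
        have "u'.pert y u v t e = 0" if "e \<notin> E" for e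
          using that uvE yP' by (auto simp: u'.pert_def base_polyhedron_def)
        moreover have "(\<Sum>e\<in>B. u'.pert y u v t e) \<le> real (\<rho>' B)" if B: "B \<in> D'" for B
        proof -
          have "u \<in> B \<Longrightarrow> v \<in> B" using Busub[of B] B v by (auto simp: G_def)
          moreover have "(\<Sum>e\<in>B. y e) \<le> real (\<rho>' B)" using yP' B by (simp add: base_polyhedron_def)
          ultimately show ?thesis using u'.pert_sum[OF u'.finD[OF B], of y u v t] t0 by (auto split: if_splits)
        qed
        moreover have "(\<Sum>e\<in>E. u'.pert y u v t e) = real (\<rho>' E)"
          using u'.pert_sum[OF u'.fin, of y u v t] uvE yP' by (simp add: base_polyhedron_def)
        ultimately show ?thesis by (simp add: base_polyhedron_def)
      qed
      then have "u'.pert y u v t \<in> ?P" using sub by blast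
      then have "(\<Sum>e\<in>A. u'.pert y u v t e) \<le> real (\<rho> A)" using A by (simp add: base_polyhedron_def)
      moreover have "(\<Sum>e\<in>A. u'.pert y u v t e) = (\<Sum>e\<in>A. y e) + t"
        using u'.pert_sum[OF u.finD[OF A], of y u v t] u v by simp
      ultimately show False unfolding t_def by linarith
    qed
    have rr: "\<rho>' A = \<rho> A" if A: "A \<in> D" for A
    proof -
      have A': "A \<in> D'" using DD A by simp
      obtain x where x: "u.gprops E x" "u.tight x A" using u.construct[OF A u.E_in] u.DE[OF A] by blast
      have "x \<in> ?P'" using u.gprops_vertex[OF x(1)] vv by (auto simp: vertices_def)
      then have "(\<Sum>e\<in>A. x e) \<le> real (\<rho>' A)" using A' by (simp add: base_polyhedron_def)
      then have "real (\<rho> A) \<le> real (\<rho>' A)" using x(2) by (simp add: u.tight_def)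
      moreover
      obtain z where z: "u'.gprops E z" "u'.tight z A" using u'.construct[OF A' u'.E_in] u'.DE[OF A'] by blast
      have "z \<in> ?P" using u'.gprops_vertex[OF z(1)] sub by (auto simp: vertices_def)
      then have "(\<Sum>e\<in>A. z e) \<le> real (\<rho> A)" using A by (simp add: base_polyhedron_def)
      then have "real (\<rho>' A) \<le> real (\<rho> A)" using z(2) by (simp add: u'.tight_def)
      ultimately show ?thesis by simp
    qed
    show "lattice_extension D \<rho> D' \<rho>'" using DD rr by (auto simp: lattice_extension_def)
  qed
qed

end
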